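(* Let $2\le k<m$ be integers. Then \[ \mathbf{m}\left(\mathrm{Alt}(m)\circlearrowright\binom{[m]}{k}\right)\le\mathbf{m}\left(\mathrm{Sym}(m)\circlearrowright\binom{[m]}{k}\right)\le\binom{m-\lfloor k/2\rfloor}{\lceil k/2\rceil}. \] Consequently, for fixed $k$, if $\mathcal{C}_k$ is the family of symmetric (or alternating) groups $\mathrm{Sym}(m)$ (or $\mathrm{Alt}(m)$), $m>k$, acting on $k$-subsets of $[m]$, then \[ \lim_n\frac{\mathbf{F}_{\mathcal{C}_k}(n)}{\sqrt n}\le\frac{\sqrt{k!}}{(k/2)!}\quad\text{for } k \text{ even},\qquad \lim_n\frac{\mathbf{F}_{\mathcal{C}_k}(n)}{n^{\frac{k+1}{2k}}}\le\frac{k!^{\frac{k+1}{2k}}}{\lceil k/2\rceil!}\quad\text{for } k\text{ odd}. \]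
   Context: $[m]=\{1,\dots,m\}$, $\binom{[m]}{k}$ is the set of $k$-subsets of $[m]$, and $X\circlearrowright\binom{[m]}{k}$ is the permutation group induced by the natural action of $X\in\{\mathrm{Alt}(m),\mathrm{Sym}(m)\}$ on $k$-subsets (degree $n=\binom mk$). For a transitive permutation group $X$ on a finite set $\Omega$ with $|\Omega|\ge2$, a subset $A\subseteq\Omega$ is self-separable for $X$ if there exists $x\in X$ with $A\cap A^x=\emptyset$; $\mathbf{m}(X)$ is the minimum cardinality of a non-self-separable subset. For a family $\mathcal{C}$ of transitive groups, $\mathbf{F}_{\mathcal{C}}(n)=\max\{\mathbf{m}(X):X\in\mathcal{C}\text{ of degree } n\}$ for the degrees $n$ occurring in $\mathcal{C}$, and limits are over such $n$. *)

theory Defs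
  imports "HOL-Analysis.Analysis" "HOL-Combinatorics.Permutations" "HOL-Library.Liminf_Limsup"
begin

definition ksubsets :: "nat \<Rightarrow> nat \<Rightarrow> nat set set" where
  "ksubsets m k = {A. A \<subseteq> {1..m} \<and> card A = k}"

definition Sym_grp :: "nat \<Rightarrow> (nat \<Rightarrow> nat) set" where
  "Sym_grp m = {\<sigma>. \<sigma> permutes {1..m}}"

definition Alt_grp :: "nat \<Rightarrow> (nat \<Rightarrow> nat) set" where
  "Alt_grp m = {\<sigma>. \<sigma> permutes {1..m} \<and> evenperm \<sigma>}"

definition set_act :: "(nat \<Rightarrow> nat) \<Rightarrow> nat set \<Rightarrow> nat set" where
  "set_act \<sigma> B = \<sigma> ` B"

definition self_separable :: "('g \<Rightarrow> 'a \<Rightarrow> 'a) \<Rightarrow> 'g set \<Rightarrow> 'a set \<Rightarrow> bool" where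
  "self_separable act X A \<longleftrightarrow> (\<exists>x\<in>X. A \<inter> (act x ` A) = {})"

definition min_nonsep :: "('g \<Rightarrow> 'a \<Rightarrow> 'a) \<Rightarrow> 'g set \<Rightarrow> 'a set \<Rightarrow> nat" where
  "min_nonsep act X \<Omega> = (LEAST c. \<exists>A. A \<subseteq> \<Omega> \<and> card A = c \<and> \<not> self_separable act X A)"

definition mk :: "(nat \<Rightarrow> (nat \<Rightarrow> nat) set) \<Rightarrow> nat \<Rightarrow> nat \<Rightarrow> nat" where
  "mk G m k = min_nonsep set_act (G m) (ksubsets m k)"

definition degrees :: "nat \<Rightarrow> nat set" where
  "degrees k = {m choose k | m. k < m}"

definition F_fam :: "(nat \<Rightarrow> (nat \<Rightarrow> nat) set) \<Rightarrow> nat \<Rightarrow> nat \<Rightarrow> nat" where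
  "F_fam G k n = Max {mk G m k | m. k < m \<and> m choose k = n}"

end

theory Submission
  imports Defs
begin

lemma nonsep_construct:
  fixes m a b :: nat
  assumes ab: "a \<le> b" and mk: "a + b < m"
  shows "\<exists>A. A \<subseteq> ksubsets m (a+b) \<and> card A = (m - a) choose b \<and>
             \<not> self_separable set_act (Sym_grp m) A"
proof -
  define S where "S = {1..a}"
  define X where "X = {a+1..m}"
  define A where "A = (\<lambda>T. S \<union> T) ` {T. T \<subseteq> X \<and> card T = b}"
  have SX: "S \<inter> X = {}" "S \<union> X = {1..m}" using mk by (auto simp: S_def X_def)
  have cS: "card S = a" and cX: "card X = m - a" by (simp_all add: S_def X_def)
  have fX: "finite X" "finite S" by (simp_all add: S_def X_def)
  have inj: "inj_on (\<lambda>T. S \<union> T) {T. T \<subseteq> X \<and> card T = b}"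
  proof (rule inj_onI)
    fix T1 T2 assume "T1 \<in> {T. T \<subseteq> X \<and> card T = b}" "T2 \<in> {T. T \<subseteq> X \<and> card T = b}"
      "S \<union> T1 = S \<union> T2"
    then show "T1 = T2" using SX by blast
  qed
  have cardA: "card A = (m - a) choose b"
    unfolding A_def using card_image[OF inj] n_subsets[OF fX(1)] cX by simp
  have sub: "A \<subseteq> ksubsets m (a+b)"
  proof
    fix B assume "B \<in> A"
    then obtain T where T: "T \<subseteq> X" "card T = b" "B = S \<union> T" unfolding A_def by auto
    have "finite T" using T fX finite_subset by blast
    then have "card B = a + b" using T SX cS fX card_Un_disjoint[of S T] by auto
    moreover have "B \<subseteq> {1..m}" using T SX by auto
    ultimately show "B \<in> ksubsets m (a+b)" by (simp add: ksubsets_def)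
  qed
  have ns: "\<not> self_separable set_act (Sym_grp m) A"
  proof
    assume "self_separable set_act (Sym_grp m) A"
    then obtain \<sigma> where sp: "\<sigma> permutes {1..m}" and dis: "A \<inter> (set_act \<sigma> ` A) = {}"
      unfolding self_separable_def Sym_grp_def by auto
    have injs: "inj \<sigma>" using sp permutes_inj by blast
    define D where "D = {x \<in> X. \<sigma> x \<in> S}"
    have "\<sigma> ` D \<subseteq> S" unfolding D_def by auto
    hence "card (\<sigma> ` D) \<le> a" using cS fX card_mono by metis
    hence cD: "card D \<le> a" using card_image[OF inj_on_subset[OF injs]] by fastforce
    have DX: "D \<subseteq> X" unfolding D_def by auto
    have fD: "finite D" using DX fX finite_subset by blast
    have "b - card D \<le> card (X - D)" using card_Diff_subset[OF fD DX] cX cD mk by simp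
    then obtain U where U: "U \<subseteq> X - D" "card U = b - card D" "finite U"
      using obtain_subset_with_card_n by metis
    define T where "T = D \<union> U"
    have TX: "T \<subseteq> X" using U DX T_def by auto
    have cT: "card T = b" unfolding T_def using card_Un_disjoint[OF fD U(3)] U cD ab by auto
    define B where "B = S \<union> T"
    have BA: "B \<in> A" unfolding A_def B_def using TX cT by auto
    have B1m: "B \<subseteq> {1..m}" using TX SX B_def by auto
    have fT: "finite T" using TX fX finite_subset by blast
    have cB: "card B = a + b" using B_def card_Un_disjoint[OF fX(2) fT] SX TX cS cT by auto
    have SsB: "S \<subseteq> \<sigma> ` B"
    proof
      fix s assume s: "s \<in> S"
      have s1: "s \<in> {1..m}" using s SX by auto
      obtain x where x: "x \<in> {1..m}" "\<sigma> x = s"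
        using s1 permutes_image[OF sp] by (metis imageE)
      show "s \<in> \<sigma> ` B"
      proof (cases "x \<in> S")
        case True then show ?thesis using x B_def by auto
      next
        case False
        then have "x \<in> X" using x SX by auto
        then have "x \<in> D" using x s D_def by auto
        then show ?thesis using x B_def T_def by auto
      qed
    qed
    have sB1m: "\<sigma> ` B \<subseteq> {1..m}" using B1m permutes_image[OF sp] by auto
    define T' where "T' = \<sigma> ` B - S"
    have T'X: "T' \<subseteq> X" using sB1m SX T'_def by auto
    have fB: "finite B" using B1m finite_subset by blast
    have csB: "card (\<sigma> ` B) = a + b" using card_image[OF inj_on_subset[OF injs]] cB by auto
    have cT': "card T' = b" unfolding T'_def using card_Diff_subset[OF fX(2) SsB] csB cS by simp
    have eq: "\<sigma> ` B = S \<union> T'" using SsB T'_def by auto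
    have "\<sigma> ` B \<in> A" unfolding A_def using eq T'X cT' by auto
    moreover have "\<sigma> ` B \<in> set_act \<sigma> ` A" using BA by (auto simp: set_act_def)
    ultimately show False using dis by blast
  qed
  show ?thesis using sub cardA ns by blast
qed


lemma fact_add_prod: "fact (y + a) = (fact y :: nat) * (\<Prod>i<a. (y + 1 + i))"
  by (induction a) (auto simp: algebra_simps)

lemma cancel_fact: "fact y * X = fact y * Z \<Longrightarrow> X = (Z::nat)" by simp

lemma even_ineq:
  fixes y a :: nat
  shows "(((y+a) choose a) * fact a)^2 \<le> fact (2*a) * ((y + 2*a) choose (2*a))"
proof -
  define P where "P = (\<Prod>i<a. (y + 1 + i))"
  define R where "R = (\<Prod>i<a. (y + a + 1 + i))"
  have "fact a * fact (y+a-a) * ((y+a) choose a) = fact (y+a)" by (rule binomial_fact_lemma) simp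
  hence "fact y * (((y+a) choose a) * fact a) = fact y * P" using fact_add_prod[of y a] P_def
    by (simp add: algebra_simps)
  hence e1: "((y+a) choose a) * fact a = P" by simp
  have "fact (2*a) * fact (y+2*a-2*a) * ((y+2*a) choose (2*a)) = fact (y+2*a)"
    by (rule binomial_fact_lemma) simp
  also have "(fact (y + 2*a)::nat) = fact ((y+a)+a)" by (simp add: mult_2 add.assoc)
  also have "\<dots> = fact y * P * R" using fact_add_prod[of "y+a" a] fact_add_prod[of y a] P_def R_def
    by simp
  finally have e2: "fact (2*a) * ((y+2*a) choose (2*a)) = P * R"
    by (simp add: algebra_simps)
  have "P \<le> R" unfolding P_def R_def by (rule prod_mono) simp
  hence "P^2 \<le> P * R" by (simp add: power2_eq_square)
  thus ?thesis using e1 e2 by simp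
qed

lemma odd_ineq:
  fixes y a :: nat
  shows "(((y+a+1) choose (a+1)) * fact (a+1))^(2*a+1)
         \<le> (fact (2*a+1) * ((y + 2*a + 1) choose (2*a+1)))^(a+1)"
proof -
  define P where "P = (\<Prod>i<a+1. (y + 1 + i))"
  define R where "R = (\<Prod>i<a. (y + (a+1) + 1 + i))"
  have "fact (a+1) * fact (y+a+1-(a+1)) * ((y+a+1) choose (a+1)) = fact (y+a+1)"
    by (rule binomial_fact_lemma) simp
  hence "fact y * (((y+a+1) choose (a+1)) * fact (a+1)) = fact y * P"
    using fact_add_prod[of y "a+1"] P_def by (simp add: algebra_simps)
  hence e1: "((y+a+1) choose (a+1)) * fact (a+1) = P" by simp
  have d: "y+2*a+1-(2*a+1) = y" by simp
  have "fact (2*a+1) * fact (y+2*a+1-(2*a+1)) * ((y+2*a+1) choose (2*a+1)) = fact (y+2*a+1)"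
    by (rule binomial_fact_lemma) simp
  also have "(fact (y + 2*a+1)::nat) = fact ((y+(a+1))+a)" by (rule arg_cong[where f=fact]) simp
  also have "\<dots> = fact y * P * R"
  proof -
    have h1: "fact (y+(a+1)+a) = fact (y+(a+1)) * R" unfolding R_def by (rule fact_add_prod)
    have h2: "fact (y+(a+1)) = fact y * P" unfolding P_def by (rule fact_add_prod)
    show ?thesis by (simp only: h1 h2)
  qed
  finally have e2'': "fact (2*a+1) * fact (y+2*a+1-(2*a+1)) * ((y+2*a+1) choose (2*a+1)) = fact y * P * R" .
  have e2': "fact (2*a+1) * fact y * ((y+2*a+1) choose (2*a+1)) = fact y * (P * R)"
    using e2'' unfolding d by (simp only: ac_simps)
  have e2: "fact (2*a+1) * ((y+2*a+1) choose (2*a+1)) = P * R"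
    by (rule cancel_fact[of y]) (use e2' in \<open>simp only: ac_simps\<close>)
  have "P \<le> (\<Prod>i<a+1. (y + a + 1))" unfolding P_def by (rule prod_mono) simp
  hence P1: "P \<le> (y+a+1)^(a+1)" by simp
  have "(\<Prod>i<a. (y + a + 1)) \<le> R" unfolding R_def by (rule prod_mono) simp
  hence R1: "(y+a+1)^a \<le> R" by simp
  have "P^a \<le> ((y+a+1)^(a+1))^a" using P1 by (rule power_mono) simp
  also have "\<dots> = ((y+a+1)^a)^(a+1)" by (metis power_mult mult.commute)
  also have "\<dots> \<le> R^(a+1)" using R1 by (rule power_mono) simp
  finally have "P^a \<le> R^(a+1)" .
  hence hmul: "P^(a+1) * P^a \<le> P^(a+1) * R^(a+1)" by (rule mult_le_mono2)
  have e3: "P^(2*a+1) = P^(a+1) * P^a" by (metis power_add mult_2 add.commute add.left_commute)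
  have e4: "(P*R)^(a+1) = P^(a+1) * R^(a+1)" by (rule power_mult_distrib)
  have "P^(2*a+1) \<le> (P*R)^(a+1)" unfolding e3 e4 by (rule hmul)
  thus ?thesis using e1 e2 by simp
qed

lemma choose_lower: assumes "1 \<le> k" "k \<le> m" shows "m - k + 1 \<le> m choose k"
  using assms(2)
proof (induction m rule: dec_induct)
  case base then show ?case by simp
next
  case (step n)
  obtain j where j: "k = Suc j" using assms(1) by (cases k) auto
  have "Suc n choose k = (n choose j) + (n choose k)" using j by simp
  moreover have "1 \<le> n choose j" using j step(1) zero_less_binomial[of j n] by linarith
  ultimately show ?case using step by simp
qed


lemma even_real:
  fixes c N a F :: nat
  assumes h: "(c * fact a)^2 \<le> fact (2*a) * N" and N: "N > 0" and F: "F \<le> c"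
  shows "real F / sqrt (real N) \<le> sqrt (fact (2*a)) / fact a"
proof -
  have "real ((c * fact a)^2) \<le> real (fact (2*a) * N)" using h by linarith
  hence "(real c * fact a)^2 \<le> fact (2*a) * real N" by (simp add: of_nat_fact)
  hence "real c * fact a \<le> sqrt (fact (2*a) * real N)" by (rule real_le_rsqrt)
  hence "real c * fact a \<le> sqrt (fact (2*a)) * sqrt (real N)" by (simp add: real_sqrt_mult)
  moreover have "real F * fact a \<le> real c * fact a" using F by simp
  ultimately have "real F * fact a \<le> sqrt (fact (2*a)) * sqrt (real N)" by linarith
  moreover have "sqrt (real N) > 0" using N by simp
  moreover have "(fact a :: real) > 0" by simp
  ultimately show ?thesis by (simp add: field_simps)
qed

lemma odd_real:
  fixes c N k b F :: nat
  assumes h: "(c * fact b)^k \<le> (fact k * N)^b" and N: "N > 0" and F: "F \<le> c" and k: "k > 0"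
  shows "real F / real N powr (real b / real k) \<le> fact k powr (real b / real k) / fact b"
proof (cases "c = 0")
  case True
  then show ?thesis using F by simp
next
  case False
  define Q where "Q = real (c * fact b)"
  define M where "M = real (fact k * N)"
  have Qp: "Q > 0" using False by (simp add: Q_def)
  have Mp: "M > 0" using N by (simp add: M_def)
  have "Q ^ k \<le> M ^ b" using h unfolding Q_def M_def by (metis of_nat_le_iff of_nat_power)
  hence "(Q ^ k) powr (1 / real k) \<le> (M ^ b) powr (1 / real k)"
    by (intro powr_mono2) (use Qp in auto)
  moreover have "(Q ^ k) powr (1 / real k) = Q"
    using Qp k by (simp add: powr_realpow[symmetric] powr_powr)
  moreover have "(M ^ b) powr (1 / real k) = M powr (real b / real k)"
    using Mp by (simp add: powr_realpow[symmetric] powr_powr)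
  ultimately have "Q \<le> M powr (real b / real k)" by simp
  also have "\<dots> = fact k powr (real b / real k) * real N powr (real b / real k)"
    unfolding M_def by (simp add: powr_mult of_nat_fact)
  finally have "real c * fact b \<le> fact k powr (real b / real k) * real N powr (real b / real k)"
    by (simp add: Q_def of_nat_fact)
  moreover have "real F * fact b \<le> real c * fact b" using F by simp
  ultimately have "real F * fact b \<le> fact k powr (real b / real k) * real N powr (real b / real k)"
    by linarith
  moreover have "real N powr (real b / real k) > 0" using N by simp
  moreover have "(fact b :: real) > 0" by simp
  ultimately show ?thesis by (simp add: field_simps)
qed


theorem lemma8p1:
  fixes k :: nat
  assumes "2 \<le> k"
  shows "(\<forall>m. k < m \<longrightarrow>
            mk Alt_grp m k \<le> mk Sym_grp m k \<and>
            mk Sym_grp m k \<le> (m - k div 2) choose ((k + 1) div 2))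
       \<and> (\<forall>G \<in> {Sym_grp, Alt_grp}.
            (even k \<longrightarrow>
              Limsup (inf sequentially (principal (degrees k)))
                (\<lambda>n. ereal (real (F_fam G k n) / sqrt (real n)))
              \<le> ereal (sqrt (fact k) / fact (k div 2)))
          \<and> (odd k \<longrightarrow>
              Limsup (inf sequentially (principal (degrees k)))
                (\<lambda>n. ereal (real (F_fam G k n) / real n powr ((real k + 1) / (2 * real k))))
              \<le> ereal ((fact k) powr ((real k + 1) / (2 * real k)) / fact ((k + 1) div 2))))"
proof -
  define a where "a = k div 2"
  define b where "b = (k+1) div 2"
  have ab: "a + b = k" "a \<le> b" unfolding a_def b_def by presburger+
  have ex: "\<And>m. k < m \<Longrightarrow> \<exists>A. A \<subseteq> ksubsets m k \<and> card A = (m - a) choose b \<and>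
             \<not> self_separable set_act (Sym_grp m) A"
    using nonsep_construct[of a b] ab by metis
  have sym_bound: "mk Sym_grp m k \<le> (m - a) choose b" if km: "k < m" for m
  proof -
    obtain A where "A \<subseteq> ksubsets m k" "card A = (m - a) choose b"
      "\<not> self_separable set_act (Sym_grp m) A" using ex[OF km] by blast
    then show ?thesis unfolding mk_def min_nonsep_def by (intro Least_le) blast
  qed
  have alt_le: "mk Alt_grp m k \<le> mk Sym_grp m k" if "k < m" for m
  proof -
    have "\<exists>c A. A \<subseteq> ksubsets m k \<and> card A = c \<and> \<not> self_separable set_act (Sym_grp m) A"
      using ex[OF that] by blast
    from LeastI_ex[OF this] obtain A where A: "A \<subseteq> ksubsets m k" "card A = mk Sym_grp m k"
      "\<not> self_separable set_act (Sym_grp m) A" unfolding mk_def min_nonsep_def by blast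
    have "Alt_grp m \<subseteq> Sym_grp m" unfolding Alt_grp_def Sym_grp_def by blast
    hence "\<not> self_separable set_act (Alt_grp m) A" using A(3) unfolding self_separable_def by blast
    then show ?thesis using A(1,2) unfolding mk_def min_nonsep_def by (intro Least_le) blast
  qed
  have bound: "mk G m k \<le> (m - a) choose b" if "G \<in> {Sym_grp, Alt_grp}" "k < m" for G m
    using that sym_bound alt_le le_trans by blast
  have Fin: "\<exists>m. k < m \<and> m choose k = n \<and> F_fam G k n = mk G m k" if n: "n \<in> degrees k" for G n
  proof -
    have eq: "{mk G m k | m. k < m \<and> m choose k = n} = (\<lambda>m. mk G m k) ` {m. k < m \<and> m choose k = n}"
      by blast
    have "{m. k < m \<and> m choose k = n} \<subseteq> {..n+k}"
    proof
      fix m assume "m \<in> {m. k < m \<and> m choose k = n}"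
      then have "k < m" "m choose k = n" by auto
      then show "m \<in> {..n+k}" using choose_lower[of k m] assms by simp
    qed
    hence fin: "finite {mk G m k | m. k < m \<and> m choose k = n}" unfolding eq
      by (meson finite_atMost finite_imageI finite_subset)
    have ne: "{mk G m k | m. k < m \<and> m choose k = n} \<noteq> {}" using n unfolding degrees_def by blast
    have "F_fam G k n \<in> {mk G m k | m. k < m \<and> m choose k = n}"
      unfolding F_fam_def using Max_in[OF fin ne] .
    then show ?thesis by blast
  qed
  have part2: "(even k \<longrightarrow>
              Limsup (inf sequentially (principal (degrees k)))
                (\<lambda>n. ereal (real (F_fam G k n) / sqrt (real n)))
              \<le> ereal (sqrt (fact k) / fact (k div 2)))
          \<and> (odd k \<longrightarrow>
              Limsup (inf sequentially (principal (degrees k)))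
                (\<lambda>n. ereal (real (F_fam G k n) / real n powr ((real k + 1) / (2 * real k))))
              \<le> ereal ((fact k) powr ((real k + 1) / (2 * real k)) / fact ((k + 1) div 2)))"
    if G: "G \<in> {Sym_grp, Alt_grp}" for G
  proof (intro conjI impI)
    assume ev: "even k"
    have k2: "k = 2 * a" "b = a" using ev unfolding a_def b_def by presburger+
    show "Limsup (inf sequentially (principal (degrees k)))
                (\<lambda>n. ereal (real (F_fam G k n) / sqrt (real n)))
              \<le> ereal (sqrt (fact k) / fact (k div 2))"
    proof (rule Limsup_bounded, unfold eventually_inf_principal, rule always_eventually, intro allI impI)
      fix n assume n: "n \<in> degrees k"
      obtain m where m: "k < m" "m choose k = n" "F_fam G k n = mk G m k" using Fin[OF n] by blast
      define y where "y = m - k"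
      have my: "m = y + 2 * a" "m - a = y + a" using m(1) k2 y_def by auto
      have h: "(((m - a) choose a) * fact a)^2 \<le> fact (2*a) * (m choose (2*a))"
        by (subst my(2), subst my(1), rule even_ineq)
      have Np: "m choose (2*a) > 0" using m(1) k2 by simp
      have Fb: "F_fam G k n \<le> (m - a) choose a" using m(3) bound[OF G m(1)] k2 by simp
      have "real (F_fam G k n) / sqrt (real (m choose (2*a))) \<le> sqrt (fact (2*a)) / fact a"
        by (rule even_real[OF h Np Fb])
      moreover have ka: "k div 2 = a" by (simp add: a_def)
      ultimately show "ereal (real (F_fam G k n) / sqrt (real n)) \<le> ereal (sqrt (fact k) / fact (k div 2))"
        unfolding ereal_less_eq(3) ka using m(2)[symmetric] k2(1) by simp
    qed
  next
    assume od: "odd k"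
    have k2: "k = 2 * a + 1" "b = a + 1" using od unfolding a_def b_def by presburger+
    have e: "(real k + 1) / (2 * real k) = real b / real k"
      using k2 by (simp add: field_simps)
    show "Limsup (inf sequentially (principal (degrees k)))
                (\<lambda>n. ereal (real (F_fam G k n) / real n powr ((real k + 1) / (2 * real k))))
              \<le> ereal ((fact k) powr ((real k + 1) / (2 * real k)) / fact ((k + 1) div 2))"
    proof (rule Limsup_bounded, unfold eventually_inf_principal, rule always_eventually, intro allI impI)
      fix n assume n: "n \<in> degrees k"
      obtain m where m: "k < m" "m choose k = n" "F_fam G k n = mk G m k" using Fin[OF n] by blast
      define y where "y = m - k"
      have my: "m = y + 2 * a + 1" "m - a = y + a + 1" using m(1) k2 y_def by auto
      have h: "(((m - a) choose b) * fact b)^k \<le> (fact k * (m choose k))^b"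
        apply (simp only: my(2))
        apply (simp only: my(1))
        apply (simp only: k2)
        by (rule odd_ineq)
      have Np: "m choose k > 0" using m(1) by simp
      have Fb: "F_fam G k n \<le> (m - a) choose b" using m(3) bound[OF G m(1)] by simp
      have "real (F_fam G k n) / real (m choose k) powr (real b / real k) \<le> fact k powr (real b / real k) / fact b"
        by (rule odd_real[OF h Np Fb]) (use assms in simp)
      moreover have kb: "(k + 1) div 2 = b" by (simp add: b_def)
      ultimately show "ereal (real (F_fam G k n) / real n powr ((real k + 1) / (2 * real k)))
           \<le> ereal ((fact k) powr ((real k + 1) / (2 * real k)) / fact ((k + 1) div 2))"
        unfolding ereal_less_eq(3) kb e using m(2)[symmetric] by simp
    qed
  qed
  show ?thesis using part2 alt_le sym_bound unfolding a_def b_def by blast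
qed

end
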